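(* Let $n,m\ge 1$ be integers, $x_0<x_1<\dots<x_n$, $y_0<y_1<\dots<y_m$ real numbers and $z_{ij}\in\mathbf{R}$ for $0\le i\le n$, $0\le j\le m$. Put $I_{x_i}=[x_{i-1},x_i]$, $I_{y_j}=[y_{j-1},y_j]$, $I_x=[x_0,x_n]$, $I_y=[y_0,y_m]$, $E_{ij}=I_{x_i}\times I_{y_j}$, $E=I_x\times I_y$ and $N_{nm}=\{1,\dots,n\}\times\{1,\dots,m\}$. For $(i,j)\in N_{nm}$ let $L_{x_i}:I_x\to I_{x_i}$ and $L_{y_j}:I_y\to I_{y_j}$ be contraction homeomorphisms mapping the endpoints $\{x_0,x_n\}$ onto $\{x_{i-1},x_i\}$ and $\{y_0,y_m\}$ onto $\{y_{j-1},y_j\}$ respectively, and let $L_{ij}(x,y)=(L_{x_i}(x),L_{y_j}(y))$, $L_{ij}:E\to E_{ij}$. Let $q_\alpha:\{x_\alpha\}\times I_y\to\mathbf{R}$ ($\alpha=0,\dots,n$) be continuous functions with $q_\alpha(x_\alpha,y_l)=z_{\alpha l}$ for $l=0,\dots,m$, and $r_\beta:I_x\times\{y_\beta\}\to\mathbf{R}$ ($\beta=0,\dots,m$) be continuous functions with $r_\beta(x_k,y_\beta)=z_{k\beta}$ for $k=0,\dots,n$. For each $(i,j)\in N_{nm}$ let: - $s_{ij}:E_{ij}\to\mathbf{R}$ be a Lipschitz function with $|s_{ij}(x,y)|<1$ on $E_{ij}$ and $s_{ij}(x_{i-1},y)=s_{ij}(x_i,y)=0$ for $y\in I_{y_j}$,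 $s_{ij}(x,y_{j-1})=s_{ij}(x,y_j)=0$ for $x\in I_{x_i}$; - $g_{ij}:E\to\mathbf{R}$ be any Lipschitz function; - $h_{ij}:E_{ij}\to\mathbf{R}$ be a Lipschitz function with $h_{ij}=q_{i-1}$ on $\{x_{i-1}\}\times I_{y_j}$, $h_{ij}=q_i$ on $\{x_i\}\times I_{y_j}$, $h_{ij}=r_{j-1}$ on $I_{x_i}\times\{y_{j-1}\}$, $h_{ij}=r_j$ on $I_{x_i}\times\{y_j\}$; - $Q_{ij}(x,y)=-s_{ij}(L_{ij}(x,y))\,g_{ij}(x,y)+h_{ij}(L_{ij}(x,y))$ for $(x,y)\in E$; - $F_{ij}(x,y,z)=s_{ij}(L_{ij}(x,y))\,z+Q_{ij}(x,y)$ and $W_{ij}(x,y,z)=(L_{ij}(x,y),F_{ij}(x,y,z))$ for $(x,y,z)\in E\times\mathbf{R}$. Then the attractor $A$ of the iterated function system $\{W_{ij}:(i,j)\in N_{nm}\}$ is the graph of a continuous function $f:E\to\mathbf{R}$.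
   Context: The maps $W_{ij}$ are contractions with respect to the metric $\rho_\theta((x,y,z),(x',y',z'))=|x-x'|+|y-y'|+\theta|z-z'|$ on $\mathbf{R}^3$ for a suitable small $\theta>0$ (equivalent to the Euclidean metric). The attractor of the IFS is the unique nonempty compact set $A\subset E\times\mathbf{R}$ with $A=\bigcup_{(i,j)\in N_{nm}}W_{ij}(A)$. The graph of $f$ is $\{(x,y,f(x,y)):(x,y)\in E\}$. *)

theory Defs
  imports "HOL-Analysis.Analysis"
begin

definition contraction_on :: "real set \<Rightarrow> (real \<Rightarrow> real) \<Rightarrow> bool" where
  "contraction_on S f \<longleftrightarrow> (\<exists>c<1. c-lipschitz_on S f)"

definition Lmap :: "(nat \<Rightarrow> real \<Rightarrow> real) \<Rightarrow> (nat \<Rightarrow> real \<Rightarrow> real) \<Rightarrow> nat \<Rightarrow> nat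
    \<Rightarrow> real \<times> real \<Rightarrow> real \<times> real" where
  "Lmap Lx Ly i j p = (Lx i (fst p), Ly j (snd p))"

definition Qmap :: "(nat \<Rightarrow> nat \<Rightarrow> real \<times> real \<Rightarrow> real) \<Rightarrow> (nat \<Rightarrow> nat \<Rightarrow> real \<times> real \<Rightarrow> real)
    \<Rightarrow> (nat \<Rightarrow> nat \<Rightarrow> real \<times> real \<Rightarrow> real)
    \<Rightarrow> (nat \<Rightarrow> real \<Rightarrow> real) \<Rightarrow> (nat \<Rightarrow> real \<Rightarrow> real) \<Rightarrow> nat \<Rightarrow> nat \<Rightarrow> real \<times> real \<Rightarrow> real" where
  "Qmap s g h Lx Ly i j p = - s i j (Lmap Lx Ly i j p) * g i j p + h i j (Lmap Lx Ly i j p)"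

definition Fmap :: "(nat \<Rightarrow> nat \<Rightarrow> real \<times> real \<Rightarrow> real) \<Rightarrow> (nat \<Rightarrow> nat \<Rightarrow> real \<times> real \<Rightarrow> real)
    \<Rightarrow> (nat \<Rightarrow> nat \<Rightarrow> real \<times> real \<Rightarrow> real)
    \<Rightarrow> (nat \<Rightarrow> real \<Rightarrow> real) \<Rightarrow> (nat \<Rightarrow> real \<Rightarrow> real) \<Rightarrow> nat \<Rightarrow> nat \<Rightarrow> real \<times> real \<times> real \<Rightarrow> real" where
  "Fmap s g h Lx Ly i j v = s i j (Lmap Lx Ly i j (fst v, fst (snd v))) * snd (snd v)
      + Qmap s g h Lx Ly i j (fst v, fst (snd v))"

definition Wmap :: "(nat \<Rightarrow> nat \<Rightarrow> real \<times> real \<Rightarrow> real) \<Rightarrow> (nat \<Rightarrow> nat \<Rightarrow> real \<times> real \<Rightarrow> real)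
    \<Rightarrow> (nat \<Rightarrow> nat \<Rightarrow> real \<times> real \<Rightarrow> real)
    \<Rightarrow> (nat \<Rightarrow> real \<Rightarrow> real) \<Rightarrow> (nat \<Rightarrow> real \<Rightarrow> real) \<Rightarrow> nat \<Rightarrow> nat \<Rightarrow> real \<times> real \<times> real
    \<Rightarrow> real \<times> real \<times> real" where
  "Wmap s g h Lx Ly i j v = (Lx i (fst v), Ly j (fst (snd v)), Fmap s g h Lx Ly i j v)"

definition is_attractor :: "(real \<times> real) set \<Rightarrow> (nat \<times> nat) set
    \<Rightarrow> (nat \<Rightarrow> nat \<Rightarrow> real \<times> real \<times> real \<Rightarrow> real \<times> real \<times> real) \<Rightarrow> (real \<times> real \<times> real) set \<Rightarrow> bool" where
  "is_attractor E N W A \<longleftrightarrow> A \<noteq> {} \<and> compact A \<and> A \<subseteq> {(a, b, c). (a, b) \<in> E}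
     \<and> A = (\<Union>(i, j)\<in>N. W i j ` A)"

definition graph_of :: "(real \<times> real) set \<Rightarrow> (real \<times> real \<Rightarrow> real) \<Rightarrow> (real \<times> real \<times> real) set" where
  "graph_of E f = {(a, b, f (a, b)) | a b. (a, b) \<in> E}"

end

theory Submission
  imports Defs
begin


lemma seq_mono:
  fixes u :: "nat \<Rightarrow> real"
  assumes inc: "\<And>i. i < k \<Longrightarrow> u i < u (Suc i)"
  shows "i < j \<Longrightarrow> j \<le> k \<Longrightarrow> u i < u j"
proof (induction j)
  case 0 then show ?case by simp
next
  case (Suc j)
  show ?case
  proof (cases "i = j")
    case True then show ?thesis using inc Suc by simp
  next
    case False
    then have "u i < u j" using Suc by simp
    also have "\<dots> < u (Suc j)" using inc Suc by simp
    finally show ?thesis .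
  qed
qed

lemma seq_cover:
  fixes u :: "nat \<Rightarrow> real"
  assumes inc: "\<And>i. i < k \<Longrightarrow> u i < u (Suc i)"
  shows "1 \<le> k \<Longrightarrow> u 0 \<le> a \<Longrightarrow> a \<le> u k \<Longrightarrow> \<exists>i\<in>{1..k}. u (i - 1) \<le> a \<and> a \<le> u i"
  using inc
proof (induction k)
  case 0 then show ?case by simp
next
  case (Suc k)
  show ?case
  proof (cases "1 \<le> k \<and> a \<le> u k")
    case True
    then obtain i where "i\<in>{1..k}" "u (i - 1) \<le> a \<and> a \<le> u i" using Suc by auto
    then show ?thesis by (intro bexI[of _ i]) auto
  next
    case False
    then have "u k \<le> a" using Suc by (cases k) auto
    then show ?thesis using Suc by (intro bexI[of _ "Suc k"]) auto
  qed
qed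

lemma seq_overlap:
  fixes u :: "nat \<Rightarrow> real"
  assumes inc: "\<And>i. i < k \<Longrightarrow> u i < u (Suc i)"
    and "i \<in> {1..k}" "i' \<in> {1..k}" "i < i'"
    and "u (i - 1) \<le> a" "a \<le> u i" "u (i' - 1) \<le> a" "a \<le> u i'"
  shows "a = u i \<and> i' = Suc i"
proof -
  obtain j where j: "i' = Suc j" using assms by (cases i') auto
  have jk: "j \<le> k" "i \<le> j" using j assms by auto
  have mono: "i < j \<Longrightarrow> u i < u j" using seq_mono[where u=u and k=k and i=i and j=j, OF inc] jk by auto
  have "u i \<le> u j" using mono jk by (cases "i = j") (auto simp: less_le)
  then have eq: "a = u i" "u i = u j" using assms j by auto
  have "\<not> i < j" using mono eq by auto
  then show ?thesis using eq jk j by auto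
qed


locale fif =
  fixes n m :: nat and x y :: "nat \<Rightarrow> real" and z :: "nat \<Rightarrow> nat \<Rightarrow> real"
    and Lx Ly :: "nat \<Rightarrow> real \<Rightarrow> real"
    and q r :: "nat \<Rightarrow> real \<times> real \<Rightarrow> real"
    and s g h :: "nat \<Rightarrow> nat \<Rightarrow> real \<times> real \<Rightarrow> real"
  assumes n: "n \<ge> 1" and m: "m \<ge> 1"
    and xinc: "\<And>i. i < n \<Longrightarrow> x i < x (Suc i)"
    and yinc: "\<And>j. j < m \<Longrightarrow> y j < y (Suc j)"
    and Lx_hom: "\<And>i. i \<in> {1..n} \<Longrightarrow>
        (\<exists>L'. homeomorphism {x 0..x n} {x (i - 1)..x i} (Lx i) L')"
    and Lx_contr: "\<And>i. i \<in> {1..n} \<Longrightarrow> contraction_on {x 0..x n} (Lx i)"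
    and Lx_end: "\<And>i. i \<in> {1..n} \<Longrightarrow> Lx i ` {x 0, x n} = {x (i - 1), x i}"
    and Ly_hom: "\<And>j. j \<in> {1..m} \<Longrightarrow>
        (\<exists>L'. homeomorphism {y 0..y m} {y (j - 1)..y j} (Ly j) L')"
    and Ly_contr: "\<And>j. j \<in> {1..m} \<Longrightarrow> contraction_on {y 0..y m} (Ly j)"
    and Ly_end: "\<And>j. j \<in> {1..m} \<Longrightarrow> Ly j ` {y 0, y m} = {y (j - 1), y j}"
    and q_cont: "\<And>a. a \<le> n \<Longrightarrow> continuous_on ({x a} \<times> {y 0..y m}) (q a)"
    and q_val: "\<And>a l. a \<le> n \<Longrightarrow> l \<le> m \<Longrightarrow> q a (x a, y l) = z a l"
    and r_cont: "\<And>b. b \<le> m \<Longrightarrow> continuous_on ({x 0..x n} \<times> {y b}) (r b)"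
    and r_val: "\<And>b k. b \<le> m \<Longrightarrow> k \<le> n \<Longrightarrow> r b (x k, y b) = z k b"
    and s_lip: "\<And>i j. (i, j) \<in> {1..n} \<times> {1..m} \<Longrightarrow>
        \<exists>C. C-lipschitz_on ({x (i - 1)..x i} \<times> {y (j - 1)..y j}) (s i j)"
    and s_bound: "\<And>i j a b. (i, j) \<in> {1..n} \<times> {1..m} \<Longrightarrow>
        (a, b) \<in> {x (i - 1)..x i} \<times> {y (j - 1)..y j} \<Longrightarrow> \<bar>s i j (a, b)\<bar> < 1"
    and s_xbdry: "\<And>i j b. (i, j) \<in> {1..n} \<times> {1..m} \<Longrightarrow> b \<in> {y (j - 1)..y j} \<Longrightarrow>
        s i j (x (i - 1), b) = 0 \<and> s i j (x i, b) = 0"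
    and s_ybdry: "\<And>i j a. (i, j) \<in> {1..n} \<times> {1..m} \<Longrightarrow> a \<in> {x (i - 1)..x i} \<Longrightarrow>
        s i j (a, y (j - 1)) = 0 \<and> s i j (a, y j) = 0"
    and g_lip: "\<And>i j. (i, j) \<in> {1..n} \<times> {1..m} \<Longrightarrow>
        \<exists>C. C-lipschitz_on ({x 0..x n} \<times> {y 0..y m}) (g i j)"
    and h_lip: "\<And>i j. (i, j) \<in> {1..n} \<times> {1..m} \<Longrightarrow>
        \<exists>C. C-lipschitz_on ({x (i - 1)..x i} \<times> {y (j - 1)..y j}) (h i j)"
    and h_xbdry: "\<And>i j b. (i, j) \<in> {1..n} \<times> {1..m} \<Longrightarrow> b \<in> {y (j - 1)..y j} \<Longrightarrow>
        h i j (x (i - 1), b) = q (i - 1) (x (i - 1), b) \<and> h i j (x i, b) = q i (x i, b)"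
    and h_ybdry: "\<And>i j a. (i, j) \<in> {1..n} \<times> {1..m} \<Longrightarrow> a \<in> {x (i - 1)..x i} \<Longrightarrow>
        h i j (a, y (j - 1)) = r (j - 1) (a, y (j - 1)) \<and> h i j (a, y j) = r j (a, y j)"

begin

definition "EE = {x 0..x n} \<times> {y 0..y m}"
definition "NN = {1..n} \<times> {1..m}"
definition "cell i j = {x (i - 1)..x i} \<times> {y (j - 1)..y j}"

lemma x_cover: "a \<in> {x 0..x n} \<Longrightarrow> \<exists>i\<in>{1..n}. a \<in> {x (i - 1)..x i}"
  using seq_cover[where u=x and k=n, OF xinc] n by auto
lemma y_cover: "b \<in> {y 0..y m} \<Longrightarrow> \<exists>j\<in>{1..m}. b \<in> {y (j - 1)..y j}"
  using seq_cover[where u=y and k=m, OF yinc] m by auto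

lemma cover: "v \<in> EE \<Longrightarrow> \<exists>ij\<in>NN. v \<in> cell (fst ij) (snd ij)"
proof -
  assume "v \<in> EE"
  then have "fst v \<in> {x 0..x n}" "snd v \<in> {y 0..y m}" unfolding EE_def by (auto simp: mem_Times_iff)
  then obtain i j where "i\<in>{1..n}" "fst v \<in> {x (i - 1)..x i}" "j\<in>{1..m}" "snd v \<in> {y (j - 1)..y j}"
    using x_cover y_cover by meson
  then show ?thesis unfolding NN_def cell_def by (intro bexI[of _ "(i,j)"]) (auto simp: mem_Times_iff)
qed

lemma x_le: "i \<le> i' \<Longrightarrow> i' \<le> n \<Longrightarrow> x i \<le> x i'"
  using seq_mono[where u=x and k=n and i=i and j=i', OF xinc] by (cases "i = i'") (auto simp: less_le)
lemma y_le: "j \<le> j' \<Longrightarrow> j' \<le> m \<Longrightarrow> y j \<le> y j'"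
  using seq_mono[where u=y and k=m and i=j and j=j', OF yinc] by (cases "j = j'") (auto simp: less_le)

lemma cell_sub: "(i, j) \<in> NN \<Longrightarrow> cell i j \<subseteq> EE"
proof -
  assume "(i, j) \<in> NN"
  then have "x 0 \<le> x (i - 1)" "x i \<le> x n" "y 0 \<le> y (j - 1)" "y j \<le> y m"
    using x_le[of 0 "i - 1"] x_le[of i n] y_le[of 0 "j - 1"] y_le[of j m] unfolding NN_def by auto
  then show ?thesis unfolding cell_def EE_def by (auto simp: mem_Times_iff)
qed

lemma EE_Union: "EE = (\<Union>ij\<in>NN. cell (fst ij) (snd ij))"
  using cover cell_sub by fastforce

definition "Lxi i = (SOME L'. homeomorphism {x 0..x n} {x (i - 1)..x i} (Lx i) L')"
definition "Lyi j = (SOME L'. homeomorphism {y 0..y m} {y (j - 1)..y j} (Ly j) L')"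

lemma Lx_homeo: "i \<in> {1..n} \<Longrightarrow> homeomorphism {x 0..x n} {x (i - 1)..x i} (Lx i) (Lxi i)"
  unfolding Lxi_def using Lx_hom by (rule someI_ex)
lemma Ly_homeo: "j \<in> {1..m} \<Longrightarrow> homeomorphism {y 0..y m} {y (j - 1)..y j} (Ly j) (Lyi j)"
  unfolding Lyi_def using Ly_hom by (rule someI_ex)

definition "LP i j v = (Lx i (fst v), Ly j (snd v))"
definition "LI i j v = (Lxi i (fst v), Lyi j (snd v))"

lemma LP_cell: "(i, j) \<in> NN \<Longrightarrow> v \<in> EE \<Longrightarrow> LP i j v \<in> cell i j"
  using Lx_homeo[of i] Ly_homeo[of j] unfolding NN_def EE_def cell_def LP_def homeomorphism_def
  by (auto simp: mem_Times_iff)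
lemma LI_EE: "(i, j) \<in> NN \<Longrightarrow> v \<in> cell i j \<Longrightarrow> LI i j v \<in> EE"
  using Lx_homeo[of i] Ly_homeo[of j] unfolding NN_def EE_def cell_def LI_def homeomorphism_def
  by (auto simp: mem_Times_iff)
lemma LI_LP: "(i, j) \<in> NN \<Longrightarrow> v \<in> EE \<Longrightarrow> LI i j (LP i j v) = v"
  using Lx_homeo[of i] Ly_homeo[of j] unfolding NN_def EE_def LI_def LP_def homeomorphism_def
  by (auto simp: mem_Times_iff)
lemma LP_LI: "(i, j) \<in> NN \<Longrightarrow> v \<in> cell i j \<Longrightarrow> LP i j (LI i j v) = v"
  using Lx_homeo[of i] Ly_homeo[of j] unfolding NN_def cell_def LI_def LP_def homeomorphism_def
  by (auto simp: mem_Times_iff)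
lemma LI_cont: "(i, j) \<in> NN \<Longrightarrow> continuous_on (cell i j) (LI i j)"
proof -
  assume ij: "(i, j) \<in> NN"
  have c1: "continuous_on {x (i - 1)..x i} (Lxi i)" "continuous_on {y (j - 1)..y j} (Lyi j)"
    using Lx_homeo[of i] Ly_homeo[of j] ij unfolding NN_def homeomorphism_def by auto
  have "continuous_on (cell i j) (\<lambda>v. Lxi i (fst v))"
    unfolding cell_def
    by (rule continuous_on_compose2[OF c1(1) continuous_on_fst]) (auto simp: mem_Times_iff)
  moreover have "continuous_on (cell i j) (\<lambda>v. Lyi j (snd v))"
    unfolding cell_def
    by (rule continuous_on_compose2[OF c1(2) continuous_on_snd]) (auto simp: mem_Times_iff)
  ultimately show ?thesis unfolding LI_def by (intro continuous_on_Pair)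
qed

definition "Phi f i j v = s i j v * (f (LI i j v) - g i j (LI i j v)) + h i j v"

lemma phi_xlo: "(i, j) \<in> NN \<Longrightarrow> v \<in> cell i j \<Longrightarrow> fst v = x (i - 1) \<Longrightarrow> Phi f i j v = q (i - 1) (x (i - 1), snd v)"
  using s_xbdry[of i j "snd v"] h_xbdry[of i j "snd v"] unfolding Phi_def NN_def cell_def
  by (cases v) (auto simp: mem_Times_iff)
lemma phi_xhi: "(i, j) \<in> NN \<Longrightarrow> v \<in> cell i j \<Longrightarrow> fst v = x i \<Longrightarrow> Phi f i j v = q i (x i, snd v)"
  using s_xbdry[of i j "snd v"] h_xbdry[of i j "snd v"] unfolding Phi_def NN_def cell_def
  by (cases v) (auto simp: mem_Times_iff)
lemma phi_ylo: "(i, j) \<in> NN \<Longrightarrow> v \<in> cell i j \<Longrightarrow> snd v = y (j - 1) \<Longrightarrow> Phi f i j v = r (j - 1) (fst v, y (j - 1))"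
  using s_ybdry[of i j "fst v"] h_ybdry[of i j "fst v"] unfolding Phi_def NN_def cell_def
  by (cases v) (auto simp: mem_Times_iff)
lemma phi_yhi: "(i, j) \<in> NN \<Longrightarrow> v \<in> cell i j \<Longrightarrow> snd v = y j \<Longrightarrow> Phi f i j v = r j (fst v, y j)"
  using s_ybdry[of i j "fst v"] h_ybdry[of i j "fst v"] unfolding Phi_def NN_def cell_def
  by (cases v) (auto simp: mem_Times_iff)

lemma consist_x: "(i, j) \<in> NN \<Longrightarrow> (i', j') \<in> NN \<Longrightarrow> i < i' \<Longrightarrow> v \<in> cell i j \<Longrightarrow> v \<in> cell i' j'
   \<Longrightarrow> Phi f i j v = Phi f i' j' v"
proof -
  assume a: "(i, j) \<in> NN" "(i', j') \<in> NN" "i < i'" "v \<in> cell i j" "v \<in> cell i' j'"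
  then have "fst v = x i \<and> i' = Suc i"
    using seq_overlap[where u=x and k=n and i=i and i'=i' and a="fst v", OF xinc]
    unfolding NN_def cell_def by (auto simp: mem_Times_iff)
  then show ?thesis using phi_xhi[OF a(1) a(4)] phi_xlo[OF a(2) a(5)] by simp
qed
lemma consist_y: "(i, j) \<in> NN \<Longrightarrow> (i, j') \<in> NN \<Longrightarrow> j < j' \<Longrightarrow> v \<in> cell i j \<Longrightarrow> v \<in> cell i j'
   \<Longrightarrow> Phi f i j v = Phi f i j' v"
proof -
  assume a: "(i, j) \<in> NN" "(i, j') \<in> NN" "j < j'" "v \<in> cell i j" "v \<in> cell i j'"
  then have "snd v = y j \<and> j' = Suc j"
    using seq_overlap[where u=y and k=m and i=j and i'=j' and a="snd v", OF yinc]
    unfolding NN_def cell_def by (auto simp: mem_Times_iff)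
  then show ?thesis using phi_yhi[OF a(1) a(4)] phi_ylo[OF a(2) a(5)] by simp
qed

lemma consist: assumes that: "(i, j) \<in> NN" "(i', j') \<in> NN" "v \<in> cell i j" "v \<in> cell i' j'"
   shows "Phi f i j v = Phi f i' j' v"
proof (cases i i' rule: linorder_cases)
  case less then show ?thesis using consist_x that by blast
next
  case greater then show ?thesis using consist_x[of i' j' i j v f] that by auto
next
  case equal
  then show ?thesis using consist_y[of i j j' v f] consist_y[of i j' j v f] that
    by (cases j j' rule: linorder_cases) auto
qed

definition "G f v = (let ij = SOME ij. ij \<in> NN \<and> v \<in> cell (fst ij) (snd ij) in Phi f (fst ij) (snd ij) v)"

lemma G_eq: "(i, j) \<in> NN \<Longrightarrow> v \<in> cell i j \<Longrightarrow> G f v = Phi f i j v"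
proof -
  assume a: "(i, j) \<in> NN" "v \<in> cell i j"
  let ?ij = "SOME ij. ij \<in> NN \<and> v \<in> cell (fst ij) (snd ij)"
  have "?ij \<in> NN \<and> v \<in> cell (fst ?ij) (snd ?ij)" by (rule someI[of _ "(i,j)"]) (use a in auto)
  then show ?thesis unfolding G_def Let_def using consist[of "fst ?ij" "snd ?ij" i j v f] a by auto
qed

lemma lip_cont: "C-lipschitz_on S ff \<Longrightarrow> continuous_on S ff"
  by (rule lipschitz_on_continuous_on)

lemma Phi_cont: "(i, j) \<in> NN \<Longrightarrow> continuous_on EE f \<Longrightarrow> continuous_on (cell i j) (Phi f i j)"
proof -
  assume ij: "(i, j) \<in> NN" and f: "continuous_on EE f"
  have cs: "continuous_on (cell i j) (s i j)" "continuous_on (cell i j) (h i j)"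
    using s_lip[of i j] h_lip[of i j] ij lip_cont unfolding NN_def cell_def by blast+
  have cg: "continuous_on EE (g i j)" using g_lip[of i j] ij lip_cont unfolding NN_def EE_def by blast
  have sub: "LI i j ` cell i j \<subseteq> EE" using LI_EE ij by auto
  have "continuous_on (cell i j) (\<lambda>v. f (LI i j v))"
    by (rule continuous_on_compose2[OF f LI_cont[OF ij] sub])
  moreover have "continuous_on (cell i j) (\<lambda>v. g i j (LI i j v))"
    by (rule continuous_on_compose2[OF cg LI_cont[OF ij] sub])
  ultimately show ?thesis unfolding Phi_def using cs by (intro continuous_intros)
qed

lemma G_cont: "continuous_on EE f \<Longrightarrow> continuous_on EE (G f)"
proof -
  assume f: "continuous_on EE f"
  have "continuous_on (\<Union>ij\<in>NN. cell (fst ij) (snd ij)) (G f)"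
  proof (rule continuous_on_closed_Union)
    show "finite NN" unfolding NN_def by auto
    fix ij assume ij: "ij \<in> NN"
    show "closed (cell (fst ij) (snd ij))" unfolding cell_def by (intro closed_Times) auto
    have "continuous_on (cell (fst ij) (snd ij)) (Phi f (fst ij) (snd ij))"
      using Phi_cont[of "fst ij" "snd ij" f] ij f by auto
    then show "continuous_on (cell (fst ij) (snd ij)) (G f)"
      by (rule continuous_on_eq) (metis G_eq ij prod.collapse)
  qed
  then show ?thesis using EE_Union by simp
qed

lemma smax: "\<exists>c. 0 \<le> c \<and> c < 1 \<and> (\<forall>ij\<in>NN. \<forall>v\<in>cell (fst ij) (snd ij). \<bar>s (fst ij) (snd ij) v\<bar> \<le> c)"
proof -
  have "\<forall>ij\<in>NN. \<exists>c. 0 \<le> c \<and> c < 1 \<and> (\<forall>v\<in>cell (fst ij) (snd ij). \<bar>s (fst ij) (snd ij) v\<bar> \<le> c)"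
  proof
    fix ij assume ij: "ij \<in> NN"
    obtain i j where ijd: "ij = (i, j)" by (cases ij)
    have cs: "continuous_on (cell i j) (\<lambda>v. \<bar>s i j v\<bar>)"
      using s_lip[of i j] ij ijd lip_cont unfolding NN_def cell_def by (blast intro: continuous_intros)
    have "x (i - 1) < x i" using xinc[of "i - 1"] ij ijd unfolding NN_def by (cases i) auto
    moreover have "y (j - 1) < y j" using yinc[of "j - 1"] ij ijd unfolding NN_def by (cases j) auto
    ultimately have ne: "cell i j \<noteq> {}" unfolding cell_def by auto
    have "compact (cell i j)" unfolding cell_def by (intro compact_Times) auto
    then obtain w where w: "w \<in> cell i j" "\<forall>v\<in>cell i j. \<bar>s i j v\<bar> \<le> \<bar>s i j w\<bar>"
      using continuous_attains_sup[OF _ ne cs] by blast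
    have "\<bar>s i j w\<bar> < 1" using s_bound[of i j "fst w" "snd w"] w ij ijd unfolding NN_def cell_def by auto
    then show "\<exists>c. 0 \<le> c \<and> c < 1 \<and> (\<forall>v\<in>cell (fst ij) (snd ij). \<bar>s (fst ij) (snd ij) v\<bar> \<le> c)"
      using w ijd by (intro exI[of _ "\<bar>s i j w\<bar>"]) auto
  qed
  then obtain c where c: "\<forall>ij\<in>NN. 0 \<le> c ij \<and> c ij < 1 \<and> (\<forall>v\<in>cell (fst ij) (snd ij). \<bar>s (fst ij) (snd ij) v\<bar> \<le> c ij)"
    by metis
  have fin: "finite NN" "NN \<noteq> {}" unfolding NN_def using n m by auto
  let ?c = "Max (c ` NN)"
  have "?c \<in> c ` NN" using fin by auto
  then have "?c < 1" "0 \<le> ?c" using c by auto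
  moreover have "\<forall>ij\<in>NN. c ij \<le> ?c" using fin by auto
  ultimately show ?thesis using c by (intro exI[of _ ?c]) (meson order_trans)
qed

lemma x0n: "x 0 \<le> x n" using x_le[of 0 n] by simp
lemma y0m: "y 0 \<le> y m" using y_le[of 0 m] by simp

definition "clmp v = (max (x 0) (min (x n) (fst v)), max (y 0) (min (y m) (snd v)))"

lemma clmp_EE: "clmp v \<in> EE" unfolding clmp_def EE_def using x0n y0m by (auto simp: mem_Times_iff)
lemma clmp_id: "v \<in> EE \<Longrightarrow> clmp v = v" unfolding clmp_def EE_def by (cases v) (auto simp: mem_Times_iff)
lemma clmp_cont: "continuous_on UNIV clmp" unfolding clmp_def by (intro continuous_intros)


lemma Tmem: "(\<lambda>v. G (apply_bcontfun f) (clmp v)) \<in> bcontfun"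
proof -
  have cG: "continuous_on EE (G (apply_bcontfun f))" by (rule G_cont) simp
  have c: "continuous_on UNIV (\<lambda>v. G (apply_bcontfun f) (clmp v))"
    by (rule continuous_on_compose2[OF cG clmp_cont]) (use clmp_EE in auto)
  have "compact EE" unfolding EE_def by (intro compact_Times) auto
  then have "compact (G (apply_bcontfun f) ` EE)" by (rule compact_continuous_image[OF cG])
  then have "bounded (G (apply_bcontfun f) ` EE)" by (rule compact_imp_bounded)
  moreover have "range (\<lambda>v. G (apply_bcontfun f) (clmp v)) \<subseteq> G (apply_bcontfun f) ` EE"
    using clmp_EE by auto
  ultimately have "bounded (range (\<lambda>v. G (apply_bcontfun f) (clmp v)))" by (rule bounded_subset)
  with c show ?thesis unfolding bcontfun_def by simp
qed

definition "Tfun f = Bcontfun (\<lambda>v. G (apply_bcontfun f) (clmp v))"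

lemma Tfun_apply: "apply_bcontfun (Tfun f) v = G (apply_bcontfun f) (clmp v)"
  unfolding Tfun_def using Tmem by (simp add: Bcontfun_inverse)

lemma exists_fix: "\<exists>F. continuous_on UNIV F \<and> (\<forall>v\<in>EE. F v = G F v)"
proof -
  obtain c where c: "0 \<le> c" "c < 1" "\<forall>ij\<in>NN. \<forall>v\<in>cell (fst ij) (snd ij). \<bar>s (fst ij) (snd ij) v\<bar> \<le> c"
    using smax by blast
  have "\<forall>f f'. dist (Tfun f) (Tfun f') \<le> c * dist f f'"
  proof (intro allI dist_bound)
    fix f f' :: "(real \<times> real) \<Rightarrow>\<^sub>C real" and v
    let ?w = "clmp v"
    obtain ij where ij: "ij \<in> NN" "?w \<in> cell (fst ij) (snd ij)" using cover clmp_EE by blast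
    obtain i j where ijd: "ij = (i, j)" by (cases ij)
    have ij': "(i, j) \<in> NN" "?w \<in> cell i j" using ij ijd by auto
    have eqd: "apply_bcontfun (Tfun f) v - apply_bcontfun (Tfun f') v
        = s i j ?w * (f (LI i j ?w) - f' (LI i j ?w))"
    proof -
      have e1: "apply_bcontfun (Tfun f) v = Phi f i j ?w" by (simp only: Tfun_apply G_eq[OF ij'])
      have e2: "apply_bcontfun (Tfun f') v = Phi f' i j ?w" by (simp only: Tfun_apply G_eq[OF ij'])
      show ?thesis unfolding e1 e2 Phi_def by (simp only: right_diff_distrib add_diff_add diff_diff_eq2)
    qed
    have "\<bar>apply_bcontfun (Tfun f) v - apply_bcontfun (Tfun f') v\<bar> = \<bar>s i j ?w\<bar> * dist (f (LI i j ?w)) (f' (LI i j ?w))"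
      unfolding eqd
      unfolding dist_real_def abs_mult ..
    also have "\<dots> \<le> c * dist f f'"
    proof (rule mult_mono)
      have "\<forall>v\<in>cell (fst (i, j)) (snd (i, j)). \<bar>s (fst (i, j)) (snd (i, j)) v\<bar> \<le> c"
        using c(3) ij'(1) by (rule bspec)
      then show "\<bar>s i j ?w\<bar> \<le> c" using ij'(2) by simp
      show "dist (f (LI i j ?w)) (f' (LI i j ?w)) \<le> dist f f'" by (rule dist_bounded)
    qed (rule c(1), rule zero_le_dist)
    finally show "dist (apply_bcontfun (Tfun f) v) (apply_bcontfun (Tfun f') v) \<le> c * dist f f'"
      unfolding dist_real_def .
  qed
  then have "\<exists>!x. Tfun x = x" by (rule banach_fix_type[OF c(1) c(2)])
  then obtain f0 where f0: "Tfun f0 = f0" by (elim ex1E) 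
  have fx: "\<forall>v\<in>EE. apply_bcontfun f0 v = G (apply_bcontfun f0) v"
  proof
    fix v assume "v \<in> EE"
    have "apply_bcontfun f0 v = apply_bcontfun (Tfun f0) v" by (simp only: f0)
    also have "\<dots> = G (apply_bcontfun f0) (clmp v)" by (rule Tfun_apply)
    also have "\<dots> = G (apply_bcontfun f0) v" by (simp only: clmp_id[OF \<open>v \<in> EE\<close>])
    finally show "apply_bcontfun f0 v = G (apply_bcontfun f0) v" .
  qed
  show ?thesis
    by (rule exI[of _ "apply_bcontfun f0"], rule conjI, rule continuous_on_apply_bcontfun, rule fx)
qed



lemma Lcontr: "\<exists>C. 0 \<le> C \<and> C < 1 \<and> (\<forall>i j p p'. (i, j) \<in> NN \<longrightarrow> p \<in> EE \<longrightarrow> p' \<in> EE \<longrightarrow>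
   dist (LP i j p) (LP i j p') \<le> C * dist p p')"
proof -
  have "\<forall>i\<in>{1..n}. \<exists>c<1. c-lipschitz_on {x 0..x n} (Lx i)" using Lx_contr unfolding contraction_on_def by blast
  then obtain cx where cx: "\<forall>i\<in>{1..n}. cx i < 1 \<and> (cx i)-lipschitz_on {x 0..x n} (Lx i)" by metis
  have "\<forall>j\<in>{1..m}. \<exists>c<1. c-lipschitz_on {y 0..y m} (Ly j)" using Ly_contr unfolding contraction_on_def by blast
  then obtain cy where cy: "\<forall>j\<in>{1..m}. cy j < 1 \<and> (cy j)-lipschitz_on {y 0..y m} (Ly j)" by metis
  define C where "C = max (Max (cx ` {1..n})) (Max (cy ` {1..m}))"
  have "Max (cx ` {1..n}) \<in> cx ` {1..n}" using n by (intro Max_in) auto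
  then have c1: "Max (cx ` {1..n}) < 1" using cx by auto
  have "Max (cy ` {1..m}) \<in> cy ` {1..m}" using m by (intro Max_in) auto
  then have c2: "Max (cy ` {1..m}) < 1" using cy by auto
  have C1: "C < 1" unfolding C_def using c1 c2 by simp
  have cxC: "cx i \<le> C" if "i \<in> {1..n}" for i
  proof -
    have "cx i \<le> Max (cx ` {1..n})" using that by (intro Max_ge) auto
    then show ?thesis unfolding C_def by linarith
  qed
  have cyC: "cy j \<le> C" if "j \<in> {1..m}" for j
  proof -
    have "cy j \<le> Max (cy ` {1..m})" using that by (intro Max_ge) auto
    then show ?thesis unfolding C_def by linarith
  qed
  have C0: "0 \<le> C" using cxC[of 1] cx n lipschitz_on_nonneg[of "cx 1"] by force
  have "dist (LP i j p) (LP i j p') \<le> C * dist p p'" if ij: "(i, j) \<in> NN" and p: "p \<in> EE" "p' \<in> EE" for i j p p'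
  proof -
    have ii: "i \<in> {1..n}" "j \<in> {1..m}" using ij unfolding NN_def by auto
    have d1: "dist (Lx i (fst p)) (Lx i (fst p')) \<le> C * dist (fst p) (fst p')"
    proof -
      have "dist (Lx i (fst p)) (Lx i (fst p')) \<le> cx i * dist (fst p) (fst p')"
        using cx ii p by (intro lipschitz_onD) (auto simp: EE_def mem_Times_iff)
      also have "\<dots> \<le> C * dist (fst p) (fst p')" using cxC[OF ii(1)] by (intro mult_right_mono) auto
      finally show ?thesis .
    qed
    have d2: "dist (Ly j (snd p)) (Ly j (snd p')) \<le> C * dist (snd p) (snd p')"
    proof -
      have "dist (Ly j (snd p)) (Ly j (snd p')) \<le> cy j * dist (snd p) (snd p')"
        using cy ii p by (intro lipschitz_onD) (auto simp: EE_def mem_Times_iff)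
      also have "\<dots> \<le> C * dist (snd p) (snd p')" using cyC[OF ii(2)] by (intro mult_right_mono) auto
      finally show ?thesis .
    qed
    have "(dist (Lx i (fst p)) (Lx i (fst p')))\<^sup>2 + (dist (Ly j (snd p)) (Ly j (snd p')))\<^sup>2
       \<le> (C * dist (fst p) (fst p'))\<^sup>2 + (C * dist (snd p) (snd p'))\<^sup>2"
      using d1 d2 by (intro add_mono power_mono) auto
    also have "\<dots> = C\<^sup>2 * ((dist (fst p) (fst p'))\<^sup>2 + (dist (snd p) (snd p'))\<^sup>2)"
      by (simp add: power_mult_distrib algebra_simps)
    finally have le: "sqrt ((dist (Lx i (fst p)) (Lx i (fst p')))\<^sup>2 + (dist (Ly j (snd p)) (Ly j (snd p')))\<^sup>2)
       \<le> sqrt (C\<^sup>2 * ((dist (fst p) (fst p'))\<^sup>2 + (dist (snd p) (snd p'))\<^sup>2))"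
      by (rule real_sqrt_le_mono)
    have "sqrt (C\<^sup>2 * ((dist (fst p) (fst p'))\<^sup>2 + (dist (snd p) (snd p'))\<^sup>2))
        = C * sqrt ((dist (fst p) (fst p'))\<^sup>2 + (dist (snd p) (snd p'))\<^sup>2)"
      using C0 by (simp add: real_sqrt_mult)
    with le show ?thesis unfolding LP_def
      by (cases p, cases p') (simp add: dist_Pair_Pair)
  qed
  then show ?thesis using C0 C1 by blast
qed

lemma W_eq: "Wmap s g h Lx Ly i j (a, b, c) =
   (fst (LP i j (a, b)), snd (LP i j (a, b)),
    s i j (LP i j (a, b)) * c - s i j (LP i j (a, b)) * g i j (a, b) + h i j (LP i j (a, b)))"
  unfolding Wmap_def Fmap_def Qmap_def Lmap_def LP_def by simp

lemma Ffix: assumes F: "\<forall>v\<in>EE. F v = G F v" and ij: "(i, j) \<in> NN" and p: "p \<in> EE"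
  shows "F (LP i j p) = s i j (LP i j p) * F p - s i j (LP i j p) * g i j p + h i j (LP i j p)"
proof -
  have c: "LP i j p \<in> cell i j" by (rule LP_cell[OF ij p])
  have "F (LP i j p) = G F (LP i j p)" using F cell_sub[OF ij] c by blast
  also have "\<dots> = Phi F i j (LP i j p)" by (rule G_eq[OF ij c])
  also have "\<dots> = s i j (LP i j p) * F p - s i j (LP i j p) * g i j p + h i j (LP i j p)"
    unfolding Phi_def LI_LP[OF ij p] by (simp add: algebra_simps)
  finally show ?thesis .
qed



lemma graph_img: "graph_of EE F = (\<lambda>p. (fst p, snd p, F p)) ` EE"
  unfolding graph_of_def by force

lemma EE_ne: "EE \<noteq> {}" unfolding EE_def using x0n y0m by auto
lemma EE_compact: "compact EE" unfolding EE_def by (intro compact_Times) auto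

lemma graph_attr:
  assumes Fc: "continuous_on UNIV F" and Ff: "\<forall>v\<in>EE. F v = G F v"
  shows "is_attractor EE NN (Wmap s g h Lx Ly) (graph_of EE F)"
  unfolding is_attractor_def
proof (intro conjI)
  show "graph_of EE F \<noteq> {}" unfolding graph_img using EE_ne by simp
  have "continuous_on EE (\<lambda>p. (fst p, snd p, F p))"
    using Fc by (intro continuous_intros) (auto intro: continuous_on_subset)
  then show "compact (graph_of EE F)" unfolding graph_img using EE_compact
    by (intro compact_continuous_image)
  show "graph_of EE F \<subseteq> {(a, b, c). (a, b) \<in> EE}" unfolding graph_of_def by auto
  show "graph_of EE F = (\<Union>(i, j)\<in>NN. Wmap s g h Lx Ly i j ` graph_of EE F)"
  proof
    show "graph_of EE F \<subseteq> (\<Union>(i, j)\<in>NN. Wmap s g h Lx Ly i j ` graph_of EE F)"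
    proof
      fix t assume "t \<in> graph_of EE F"
      then obtain a b where t: "t = (a, b, F (a, b))" "(a, b) \<in> EE" unfolding graph_of_def by auto
      obtain ij where ij: "ij \<in> NN" "(a, b) \<in> cell (fst ij) (snd ij)" using cover[OF t(2)] by blast
      obtain i j where ijd: "ij = (i, j)" by (cases ij)
      have ij': "(i, j) \<in> NN" "(a, b) \<in> cell i j" using ij ijd by auto
      define p where "p = LI i j (a, b)"
      have p: "p \<in> EE" unfolding p_def by (rule LI_EE[OF ij'])
      have lp: "LP i j p = (a, b)" unfolding p_def by (rule LP_LI[OF ij'])
      have "Wmap s g h Lx Ly i j (fst p, snd p, F p) = t"
        unfolding W_eq prod.collapse lp t(1) Ffix[OF Ff ij' (1) p, unfolded lp, symmetric] by simp
      moreover have "(fst p, snd p, F p) \<in> graph_of EE F" unfolding graph_img using p by auto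
      ultimately show "t \<in> (\<Union>(i, j)\<in>NN. Wmap s g h Lx Ly i j ` graph_of EE F)"
        using ij'(1) by force
    qed
    show "(\<Union>(i, j)\<in>NN. Wmap s g h Lx Ly i j ` graph_of EE F) \<subseteq> graph_of EE F"
    proof (clarsimp)
      fix i j t assume ij: "(i, j) \<in> NN" and "t \<in> graph_of EE F"
      then obtain a b where t: "t = (a, b, F (a, b))" "(a, b) \<in> EE" unfolding graph_of_def by auto
      have lp: "LP i j (a, b) \<in> EE" using LP_cell[OF ij t(2)] cell_sub[OF ij] by blast
      have "Wmap s g h Lx Ly i j t = (fst (LP i j (a, b)), snd (LP i j (a, b)), F (LP i j (a, b)))"
        unfolding t(1) W_eq Ffix[OF Ff ij t(2)] by simp
      then show "Wmap s g h Lx Ly i j t \<in> graph_of EE F" unfolding graph_img using lp by force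
    qed
  qed
qed

lemma W_mem: assumes A: "A = (\<Union>(i, j)\<in>NN. Wmap s g h Lx Ly i j ` A)" and "t0 \<in> A"
  obtains i j t1 where "(i, j) \<in> NN" "t1 \<in> A" "t0 = Wmap s g h Lx Ly i j t1"
proof -
  have "t0 \<in> (\<Union>(i, j)\<in>NN. Wmap s g h Lx Ly i j ` A)" using assms by simp
  then obtain ij where "ij \<in> NN" "t0 \<in> (case ij of (i, j) \<Rightarrow> Wmap s g h Lx Ly i j ` A)" by blast
  then show ?thesis using that by (cases ij) auto
qed

lemma uniq:
  assumes Fc: "continuous_on UNIV F" and Ff: "\<forall>v\<in>EE. F v = G F v"
    and A: "is_attractor EE NN (Wmap s g h Lx Ly) A"
  shows "A = graph_of EE F"
proof -
  have Ane: "A \<noteq> {}" and Ac: "compact A" and Asub: "A \<subseteq> {(a, b, c). (a, b) \<in> EE}"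
    and Aeq: "A = (\<Union>(i, j)\<in>NN. Wmap s g h Lx Ly i j ` A)"
    using A unfolding is_attractor_def by auto
  have Wmem: "Wmap s g h Lx Ly i j t \<in> A" if "(i, j) \<in> NN" "t \<in> A" for i j t
  proof -
    have "Wmap s g h Lx Ly i j t \<in> (\<Union>(i, j)\<in>NN. Wmap s g h Lx Ly i j ` A)"
      using that by blast
    then show ?thesis using Aeq by simp
  qed
  obtain c where c: "0 \<le> c" "c < 1" "\<forall>ij\<in>NN. \<forall>v\<in>cell (fst ij) (snd ij). \<bar>s (fst ij) (snd ij) v\<bar> \<le> c"
    using smax by blast
  define \<phi> where "\<phi> t = \<bar>snd (snd t) - F (fst t, fst (snd t))\<bar>" for t :: "real \<times> real \<times> real"
  have "continuous_on UNIV (\<lambda>t::real \<times> real \<times> real. F (fst t, fst (snd t)))"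
    by (rule continuous_on_compose2[OF Fc]) (auto intro!: continuous_intros)
  then have "continuous_on A \<phi>" unfolding \<phi>_def
    by (intro continuous_intros) (auto intro: continuous_on_subset)
  then obtain t0 where t0: "t0 \<in> A" "\<forall>t\<in>A. \<phi> t \<le> \<phi> t0"
    using continuous_attains_sup[OF Ac Ane] by blast
  obtain i j t1 where ij: "(i, j) \<in> NN" and t1: "t1 \<in> A" and t01: "t0 = Wmap s g h Lx Ly i j t1"
    by (rule W_mem[OF Aeq t0(1)])
  obtain a b c1 where t1d: "t1 = (a, b, c1)" by (cases t1)
  have ab: "(a, b) \<in> EE" using Asub t1 t1d by auto
  have sc: "\<bar>s i j (LP i j (a, b))\<bar> \<le> c"
  proof -
    have "\<forall>v\<in>cell (fst (i, j)) (snd (i, j)). \<bar>s (fst (i, j)) (snd (i, j)) v\<bar> \<le> c"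
      using c(3) ij by (rule bspec)
    then show ?thesis using LP_cell[OF ij ab] by simp
  qed
  have "\<phi> t0 = \<bar>s i j (LP i j (a, b)) * (c1 - F (a, b))\<bar>"
    unfolding t01 t1d W_eq \<phi>_def prod.collapse by (simp add: Ffix[OF Ff ij ab] algebra_simps)
  also have "\<dots> = \<bar>s i j (LP i j (a, b))\<bar> * \<phi> t1" unfolding \<phi>_def t1d by (simp add: abs_mult)
  also have "\<dots> \<le> c * \<phi> t0"
    using sc t0(2) t1 c(1) by (intro mult_mono) (auto simp: \<phi>_def)
  finally have "\<phi> t0 \<le> c * \<phi> t0" .
  then have "\<phi> t0 \<le> 0"
  proof (rule contrapos_pp)
    assume "\<not> \<phi> t0 \<le> 0"
    then have "c * \<phi> t0 < 1 * \<phi> t0" using c(2) by (intro mult_strict_right_mono) auto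
    then show "\<not> \<phi> t0 \<le> c * \<phi> t0" by simp
  qed
  then have gr: "\<forall>t\<in>A. snd (snd t) = F (fst t, fst (snd t))"
    using t0(2) unfolding \<phi>_def by (smt (verit))
  define K where "K = (\<lambda>t::real \<times> real \<times> real. (fst t, fst (snd t))) ` A"
  have Kc: "compact K" unfolding K_def
    by (intro compact_continuous_image[OF _ Ac]) (auto intro!: continuous_intros)
  have Kne: "K \<noteq> {}" unfolding K_def using Ane by simp
  have Kcl: "closed K" using Kc by (rule compact_imp_closed)
  have KE: "K \<subseteq> EE" unfolding K_def using Asub by auto
  obtain C where C: "0 \<le> C" "C < 1" "\<forall>i j p p'. (i, j) \<in> NN \<longrightarrow> p \<in> EE \<longrightarrow> p' \<in> EE \<longrightarrow>
      dist (LP i j p) (LP i j p') \<le> C * dist p p'" using Lcontr by blast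
  have "continuous_on EE (\<lambda>p. infdist p K)" by (intro continuous_intros)
  then obtain p0 where p0: "p0 \<in> EE" "\<forall>p\<in>EE. infdist p K \<le> infdist p0 K"
    using continuous_attains_sup[OF EE_compact EE_ne] by blast
  obtain ij where ijc: "ij \<in> NN" "p0 \<in> cell (fst ij) (snd ij)" using cover[OF p0(1)] by blast
  obtain i' j' where ijd: "ij = (i', j')" by (cases ij)
  have ij': "(i', j') \<in> NN" "p0 \<in> cell i' j'" using ijc ijd by auto
  define p1 where "p1 = LI i' j' p0"
  have p1: "p1 \<in> EE" unfolding p1_def by (rule LI_EE[OF ij'])
  have lp: "LP i' j' p1 = p0" unfolding p1_def by (rule LP_LI[OF ij'])
  obtain k where k: "k \<in> K" "infdist p1 K = dist p1 k" using infdist_attains_inf[OF Kcl Kne] by blast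
  obtain tk where tk: "tk \<in> A" "k = (fst tk, fst (snd tk))" using k(1) unfolding K_def by auto
  have "(fst (Wmap s g h Lx Ly i' j' tk), fst (snd (Wmap s g h Lx Ly i' j' tk))) \<in> K"
    unfolding K_def using Wmem[OF ij'(1) tk(1)] by blast
  moreover have "(fst (Wmap s g h Lx Ly i' j' tk), fst (snd (Wmap s g h Lx Ly i' j' tk))) = LP i' j' k"
    unfolding tk(2) by (cases tk) (simp add: W_eq)
  ultimately have lk: "LP i' j' k \<in> K" by simp
  have "infdist p0 K \<le> dist p0 (LP i' j' k)" using lk by (rule infdist_le)
  also have "\<dots> = dist (LP i' j' p1) (LP i' j' k)" by (simp add: lp)
  also have "\<dots> \<le> C * dist p1 k" using C(3) ij'(1) p1 KE k(1) by blast
  also have "\<dots> = C * infdist p1 K" by (simp add: k(2))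
  also have "\<dots> \<le> C * infdist p0 K" using p0(2) p1 C(1) by (intro mult_left_mono) auto
  finally have "infdist p0 K \<le> C * infdist p0 K" .
  then have "infdist p0 K \<le> 0"
  proof (rule contrapos_pp)
    assume "\<not> infdist p0 K \<le> 0"
    then have "C * infdist p0 K < 1 * infdist p0 K" using C(2) by (intro mult_strict_right_mono) auto
    then show "\<not> infdist p0 K \<le> C * infdist p0 K" by simp
  qed
  then have EK: "EE \<subseteq> K" using p0(2) infdist_nonneg in_closed_iff_infdist_zero[OF Kcl Kne]
    by (smt (verit) subsetI)
  show ?thesis
  proof
    show "A \<subseteq> graph_of EE F"
    proof
      fix t assume t: "t \<in> A"
      obtain a b cc where td: "t = (a, b, cc)" by (cases t)
      have "(a, b) \<in> EE" using Asub t td by auto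
      moreover have "cc = F (a, b)" using gr t td by auto
      ultimately show "t \<in> graph_of EE F" unfolding graph_of_def td by auto
    qed
    show "graph_of EE F \<subseteq> A"
    proof
      fix t assume "t \<in> graph_of EE F"
      then obtain a b where td: "t = (a, b, F (a, b))" "(a, b) \<in> EE" unfolding graph_of_def by auto
      then have "(a, b) \<in> K" using EK by auto
      then obtain t' where t': "t' \<in> A" "(a, b) = (fst t', fst (snd t'))" unfolding K_def by auto
      have "snd (snd t') = F (a, b)" using gr t' by auto
      then have "t' = t" using t' td by (cases t') auto
      then show "t \<in> A" using t' by simp
    qed
  qed
qed

lemma main: "\<exists>f. continuous_on EE f \<and> is_attractor EE NN (Wmap s g h Lx Ly) (graph_of EE f)
     \<and> (\<forall>A. is_attractor EE NN (Wmap s g h Lx Ly) A \<longrightarrow> A = graph_of EE f)"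
proof -
  obtain F where F: "continuous_on UNIV F" "\<forall>v\<in>EE. F v = G F v" using exists_fix by blast
  show ?thesis using graph_attr[OF F] uniq[OF F] continuous_on_subset[OF F(1)] by blast
qed

end

theorem theorem1:
  fixes n m :: nat and x y :: "nat \<Rightarrow> real" and z :: "nat \<Rightarrow> nat \<Rightarrow> real"
    and Lx Ly :: "nat \<Rightarrow> real \<Rightarrow> real"
    and q r :: "nat \<Rightarrow> real \<times> real \<Rightarrow> real"
    and s g h :: "nat \<Rightarrow> nat \<Rightarrow> real \<times> real \<Rightarrow> real"
  assumes n: "n \<ge> 1" and m: "m \<ge> 1"
    and xinc: "\<And>i. i < n \<Longrightarrow> x i < x (Suc i)"
    and yinc: "\<And>j. j < m \<Longrightarrow> y j < y (Suc j)"
    and Lx_hom: "\<And>i. i \<in> {1..n} \<Longrightarrow>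
        (\<exists>L'. homeomorphism {x 0..x n} {x (i - 1)..x i} (Lx i) L')"
    and Lx_contr: "\<And>i. i \<in> {1..n} \<Longrightarrow> contraction_on {x 0..x n} (Lx i)"
    and Lx_end: "\<And>i. i \<in> {1..n} \<Longrightarrow> Lx i ` {x 0, x n} = {x (i - 1), x i}"
    and Ly_hom: "\<And>j. j \<in> {1..m} \<Longrightarrow>
        (\<exists>L'. homeomorphism {y 0..y m} {y (j - 1)..y j} (Ly j) L')"
    and Ly_contr: "\<And>j. j \<in> {1..m} \<Longrightarrow> contraction_on {y 0..y m} (Ly j)"
    and Ly_end: "\<And>j. j \<in> {1..m} \<Longrightarrow> Ly j ` {y 0, y m} = {y (j - 1), y j}"
    and q_cont: "\<And>a. a \<le> n \<Longrightarrow> continuous_on ({x a} \<times> {y 0..y m}) (q a)"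
    and q_val: "\<And>a l. a \<le> n \<Longrightarrow> l \<le> m \<Longrightarrow> q a (x a, y l) = z a l"
    and r_cont: "\<And>b. b \<le> m \<Longrightarrow> continuous_on ({x 0..x n} \<times> {y b}) (r b)"
    and r_val: "\<And>b k. b \<le> m \<Longrightarrow> k \<le> n \<Longrightarrow> r b (x k, y b) = z k b"
    and s_lip: "\<And>i j. (i, j) \<in> {1..n} \<times> {1..m} \<Longrightarrow>
        \<exists>C. C-lipschitz_on ({x (i - 1)..x i} \<times> {y (j - 1)..y j}) (s i j)"
    and s_bound: "\<And>i j a b. (i, j) \<in> {1..n} \<times> {1..m} \<Longrightarrow>
        (a, b) \<in> {x (i - 1)..x i} \<times> {y (j - 1)..y j} \<Longrightarrow> \<bar>s i j (a, b)\<bar> < 1"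
    and s_xbdry: "\<And>i j b. (i, j) \<in> {1..n} \<times> {1..m} \<Longrightarrow> b \<in> {y (j - 1)..y j} \<Longrightarrow>
        s i j (x (i - 1), b) = 0 \<and> s i j (x i, b) = 0"
    and s_ybdry: "\<And>i j a. (i, j) \<in> {1..n} \<times> {1..m} \<Longrightarrow> a \<in> {x (i - 1)..x i} \<Longrightarrow>
        s i j (a, y (j - 1)) = 0 \<and> s i j (a, y j) = 0"
    and g_lip: "\<And>i j. (i, j) \<in> {1..n} \<times> {1..m} \<Longrightarrow>
        \<exists>C. C-lipschitz_on ({x 0..x n} \<times> {y 0..y m}) (g i j)"
    and h_lip: "\<And>i j. (i, j) \<in> {1..n} \<times> {1..m} \<Longrightarrow>
        \<exists>C. C-lipschitz_on ({x (i - 1)..x i} \<times> {y (j - 1)..y j}) (h i j)"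
    and h_xbdry: "\<And>i j b. (i, j) \<in> {1..n} \<times> {1..m} \<Longrightarrow> b \<in> {y (j - 1)..y j} \<Longrightarrow>
        h i j (x (i - 1), b) = q (i - 1) (x (i - 1), b) \<and> h i j (x i, b) = q i (x i, b)"
    and h_ybdry: "\<And>i j a. (i, j) \<in> {1..n} \<times> {1..m} \<Longrightarrow> a \<in> {x (i - 1)..x i} \<Longrightarrow>
        h i j (a, y (j - 1)) = r (j - 1) (a, y (j - 1)) \<and> h i j (a, y j) = r j (a, y j)"
  shows "\<exists>f. continuous_on ({x 0..x n} \<times> {y 0..y m}) f
     \<and> is_attractor ({x 0..x n} \<times> {y 0..y m}) ({1..n} \<times> {1..m}) (Wmap s g h Lx Ly)
          (graph_of ({x 0..x n} \<times> {y 0..y m}) f)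
     \<and> (\<forall>A. is_attractor ({x 0..x n} \<times> {y 0..y m}) ({1..n} \<times> {1..m}) (Wmap s g h Lx Ly) A
          \<longrightarrow> A = graph_of ({x 0..x n} \<times> {y 0..y m}) f)"
proof -
  interpret fif n m x y z Lx Ly q r s g h
    by (rule fif.intro) (fact assms)+
  show ?thesis using main unfolding EE_def NN_def .
qed

end
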